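(* Let $\psi\in\mathbb{R}[x]$. If the constant function $1$ is in the image of the Fischer operator $F_\psi$, then every zero $x\in\mathbb{R}^d$ of $\psi$ has multiplicity $\le 2$.
   Context: $\mathbb{R}[x]$ denotes the real polynomials in $d$ variables, $\Delta$ the Laplacian, and $F_\psi:\mathbb{R}[x]\to\mathbb{R}[x]$, $F_\psi(q)=\Delta(\psi q)$. The multiplicity of a zero $x_0$ of a polynomial $\psi$ is the largest natural number $N$ such that $\frac{\partial^\alpha}{\partial x^\alpha}\psi(x_0)=0$ for all multi-indices $\alpha\in\mathbb{N}_0^d$ with $|\alpha|\le N-1$. *)

theory Defs
  imports Complex_Main "HOL-Library.Poly_Mapping"
begin

(* Real polynomials in the variables x_0, x_1, ... represented by their
coefficients: a monomial is a finitely supported exponent vector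
(nat \<Rightarrow>\<^sub>0 nat), a polynomial a finitely supported coefficient map.
Multiplication is the convolution product provided by Poly_Mapping. *)

type_synonym mpoly = "(nat \<Rightarrow>\<^sub>0 nat) \<Rightarrow>\<^sub>0 real"

definition in_Rd :: "nat \<Rightarrow> mpoly \<Rightarrow> bool" where
  "in_Rd d p \<longleftrightarrow> (\<forall>m \<in> Poly_Mapping.keys p. Poly_Mapping.keys m \<subseteq> {..<d})"

definition meval :: "mpoly \<Rightarrow> (nat \<Rightarrow> real) \<Rightarrow> real" where
  "meval p x = (\<Sum>m\<in>Poly_Mapping.keys p. Poly_Mapping.lookup p m * (\<Prod>i\<in>Poly_Mapping.keys m. x i ^ Poly_Mapping.lookup m i))"

definition mpderiv :: "nat \<Rightarrow> mpoly \<Rightarrow> mpoly" where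
  "mpderiv i p = Abs_poly_mapping
     (\<lambda>m. real (Poly_Mapping.lookup m i + 1) * Poly_Mapping.lookup p (m + Poly_Mapping.single i 1))"

definition laplacian :: "nat \<Rightarrow> mpoly \<Rightarrow> mpoly" where
  "laplacian d p = (\<Sum>i<d. mpderiv i (mpderiv i p))"

definition fischer :: "nat \<Rightarrow> mpoly \<Rightarrow> mpoly \<Rightarrow> mpoly" where
  "fischer d \<psi> q = laplacian d (\<psi> * q)"

definition mderiv_multi :: "nat \<Rightarrow> (nat \<Rightarrow> nat) \<Rightarrow> mpoly \<Rightarrow> mpoly" where
  "mderiv_multi d \<alpha> p = foldr (\<lambda>i. mpderiv i ^^ \<alpha> i) [0..<d] p"

definition vanishes_to :: "nat \<Rightarrow> mpoly \<Rightarrow> (nat \<Rightarrow> real) \<Rightarrow> nat \<Rightarrow> bool" where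
  "vanishes_to d \<psi> x0 N \<longleftrightarrow>
     (\<forall>\<alpha>::nat \<Rightarrow> nat. (\<Sum>i<d. \<alpha> i) + 1 \<le> N \<longrightarrow> meval (mderiv_multi d \<alpha> \<psi>) x0 = 0)"

definition zero_multiplicity :: "nat \<Rightarrow> mpoly \<Rightarrow> (nat \<Rightarrow> real) \<Rightarrow> nat" where
  "zero_multiplicity d \<psi> x0 = (GREATEST N. vanishes_to d \<psi> x0 N)"

end

theory Submission
  imports Defs
begin

lemma update_single_add:
  assumes "a \<notin> Poly_Mapping.keys f"
  shows "Poly_Mapping.update a b f = Poly_Mapping.single a b + f"
  using assms
  by (intro poly_mapping_eqI) (auto simp: lookup_update lookup_add lookup_single in_keys_iff when_def)

lemma mpoly_induct:
  fixes p :: "('a \<Rightarrow>\<^sub>0 'b::comm_monoid_add)"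
  assumes "P 0" and "\<And>m c p. P p \<Longrightarrow> P (Poly_Mapping.single m c + p)"
  shows "P p"
proof (induction p rule: update_induct)
  case const then show ?case using assms(1) .
next
  case (update f a b)
  then show ?case using assms(2) update_single_add by metis
qed

definition mon :: "(nat \<Rightarrow>\<^sub>0 nat) \<Rightarrow> (nat \<Rightarrow> real) \<Rightarrow> real" where
  "mon m x = (\<Prod>i\<in>Poly_Mapping.keys m. x i ^ Poly_Mapping.lookup m i)"

lemma mon_superset:
  assumes "finite S" "Poly_Mapping.keys m \<subseteq> S"
  shows "mon m x = (\<Prod>i\<in>S. x i ^ Poly_Mapping.lookup m i)"
  unfolding mon_def
  by (rule prod.mono_neutral_left) (use assms in \<open>auto simp: in_keys_iff\<close>)

lemma mon_add: "mon (m + n) x = mon m x * mon n x"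
proof -
  let ?S = "Poly_Mapping.keys m \<union> Poly_Mapping.keys n"
  have "mon (m + n) x = (\<Prod>i\<in>?S. x i ^ Poly_Mapping.lookup (m+n) i)"
    using keys_add[of m n] by (intro mon_superset) auto
  also have "\<dots> = (\<Prod>i\<in>?S. x i ^ Poly_Mapping.lookup m i) * (\<Prod>i\<in>?S. x i ^ Poly_Mapping.lookup n i)"
    by (simp add: lookup_add power_add prod.distrib)
  also have "\<dots> = mon m x * mon n x"
    by (simp add: mon_superset[symmetric])
  finally show ?thesis .
qed

lemma mon_zero: "mon 0 x = 1"
  by (simp add: mon_def)

lemma meval_superset:
  assumes "finite S" "Poly_Mapping.keys p \<subseteq> S"
  shows "meval p x = (\<Sum>m\<in>S. Poly_Mapping.lookup p m * mon m x)"
  unfolding meval_def mon_def[symmetric]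
  by (rule sum.mono_neutral_left) (use assms in \<open>auto simp: in_keys_iff\<close>)

lemma meval_add: "meval (p + q) x = meval p x + meval q x"
proof -
  let ?S = "Poly_Mapping.keys p \<union> Poly_Mapping.keys q"
  have "meval (p + q) x = (\<Sum>m\<in>?S. Poly_Mapping.lookup (p+q) m * mon m x)"
    using keys_add[of p q] by (intro meval_superset) auto
  also have "\<dots> = (\<Sum>m\<in>?S. Poly_Mapping.lookup p m * mon m x) + (\<Sum>m\<in>?S. Poly_Mapping.lookup q m * mon m x)"
    by (simp add: lookup_add distrib_right sum.distrib)
  also have "\<dots> = meval p x + meval q x"
    by (simp add: meval_superset[symmetric])
  finally show ?thesis .
qed

lemma meval_zero: "meval 0 x = 0"
  by (simp add: meval_def)

lemma meval_single: "meval (Poly_Mapping.single m c) x = c * mon m x"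
  by (subst meval_superset[of "{m}"]) auto

lemma meval_one: "meval 1 x = 1"
  using meval_single[of 0 1 x] by (simp add: mon_zero)

lemma meval_mult: "meval (p * q) x = meval p x * meval q x"
proof (induction p rule: mpoly_induct)
  case 1 then show ?case by (simp add: meval_zero)
next
  case (2 m c p)
  have s: "meval (Poly_Mapping.single m c * q) x = c * mon m x * meval q x"
  proof (induction q rule: mpoly_induct)
    case 1 then show ?case by (simp add: meval_zero)
  next
    case (2 n e q)
    then show ?case
      by (simp add: distrib_left meval_add mult_single meval_single mon_add algebra_simps)
  qed
  show ?case using 2 s
    by (simp add: distrib_right meval_add meval_single algebra_simps)
qed

lemma meval_sum: "meval (\<Sum>i\<in>A. f i) x = (\<Sum>i\<in>A. meval (f i) x)"
  by (induction A rule: infinite_finite_induct) (auto simp: meval_zero meval_add)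

lemma lookup_mpderiv:
  "Poly_Mapping.lookup (mpderiv i p) m = real (Poly_Mapping.lookup m i + 1) * Poly_Mapping.lookup p (m + Poly_Mapping.single i 1)"
proof -
  have "{m. real (Poly_Mapping.lookup m i + 1) * Poly_Mapping.lookup p (m + Poly_Mapping.single i 1) \<noteq> 0}
        \<subseteq> (\<lambda>m. m + Poly_Mapping.single i 1) -` Poly_Mapping.keys p"
    by (auto simp: in_keys_iff)
  moreover have "finite ((\<lambda>m. m + Poly_Mapping.single i 1) -` Poly_Mapping.keys p)"
    by (rule finite_vimageI) (auto simp: inj_on_def)
  ultimately have "finite {m. real (Poly_Mapping.lookup m i + 1) * Poly_Mapping.lookup p (m + Poly_Mapping.single i 1) \<noteq> 0}"
    by (rule finite_subset)
  then show ?thesis unfolding mpderiv_def by simp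
qed

lemma mpderiv_add: "mpderiv i (p + q) = mpderiv i p + mpderiv i q"
  by (rule poly_mapping_eqI) (simp add: lookup_mpderiv lookup_add algebra_simps)

lemma mpderiv_zero: "mpderiv i 0 = 0"
  by (rule poly_mapping_eqI) (simp add: lookup_mpderiv)

lemma mpderiv_single_zero:
  assumes "Poly_Mapping.lookup m i = 0"
  shows "mpderiv i (Poly_Mapping.single m a) = 0"
proof (rule poly_mapping_eqI)
  fix k
  have "m \<noteq> k + Poly_Mapping.single i 1"
  proof
    assume "m = k + Poly_Mapping.single i 1"
    then have "Poly_Mapping.lookup m i = Poly_Mapping.lookup k i + 1" by (simp add: lookup_add)
    with assms show False by simp
  qed
  then show "Poly_Mapping.lookup (mpderiv i (Poly_Mapping.single m a)) k = Poly_Mapping.lookup 0 k"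
    by (simp add: lookup_mpderiv lookup_single when_def)
qed

lemma mpderiv_single_succ:
  "mpderiv i (Poly_Mapping.single (m + Poly_Mapping.single i 1) a) = Poly_Mapping.single m (a * real (Poly_Mapping.lookup m i + 1))"
proof (rule poly_mapping_eqI)
  fix k
  show "Poly_Mapping.lookup (mpderiv i (Poly_Mapping.single (m + Poly_Mapping.single i 1) a)) k =
    Poly_Mapping.lookup (Poly_Mapping.single m (a * real (Poly_Mapping.lookup m i + 1))) k"
    by (auto simp: lookup_mpderiv lookup_single when_def)
qed

lemma mon_split:
  assumes "Poly_Mapping.lookup m i \<noteq> 0"
  shows "m = (m - Poly_Mapping.single i 1) + Poly_Mapping.single i (1::nat)"
  using assms by (intro poly_mapping_eqI) (auto simp: lookup_add lookup_minus lookup_single when_def)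

lemma leibniz_single:
  "mpderiv i (Poly_Mapping.single m a * Poly_Mapping.single n b) =
   mpderiv i (Poly_Mapping.single m a) * Poly_Mapping.single n b + Poly_Mapping.single m a * mpderiv i (Poly_Mapping.single n b)"
proof (cases "Poly_Mapping.lookup m i = 0")
  case m0: True
  show ?thesis
  proof (cases "Poly_Mapping.lookup n i = 0")
    case True
    with m0 show ?thesis
      by (simp add: mult_single mpderiv_single_zero lookup_add)
  next
    case False
    define n' where "n' = n - Poly_Mapping.single i 1"
    have n: "n = n' + Poly_Mapping.single i 1" using mon_split[OF False] n'_def by simp
    have e: "m + n = (m + n') + Poly_Mapping.single i 1" by (simp add: n add.assoc)
    show ?thesis
      apply (simp only: mult_single e mpderiv_single_succ mpderiv_single_zero[OF m0])
      apply (simp only: n mpderiv_single_succ mult_single)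
      apply (simp add: lookup_add m0 mult.assoc)
      done
  qed
next
  case False
  define m' where "m' = m - Poly_Mapping.single i 1"
  have m: "m = m' + Poly_Mapping.single i 1" using mon_split[OF False] m'_def by simp
  show ?thesis
  proof (cases "Poly_Mapping.lookup n i = 0")
    case True
    have e: "m + n = (m' + n) + Poly_Mapping.single i 1" by (simp add: m add_ac)
    show ?thesis
      apply (simp only: mult_single e mpderiv_single_succ mpderiv_single_zero[OF True])
      apply (simp only: m mpderiv_single_succ mult_single)
      apply (simp add: lookup_add True mult_ac add_ac)
      done
  next
    case False
    define n' where "n' = n - Poly_Mapping.single i 1"
    have n: "n = n' + Poly_Mapping.single i 1" using mon_split[OF False] n'_def by simp
    have e: "m + n = (m' + n' + Poly_Mapping.single i 1) + Poly_Mapping.single i 1" by (simp add: m n add_ac)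
    have e1: "m' + n = m' + n' + Poly_Mapping.single i 1" by (simp add: n add_ac)
    have e2: "m + n' = m' + n' + Poly_Mapping.single i 1" by (simp add: m add_ac)
    have h1: "m' + (n' + Poly_Mapping.single i 1) = m' + n' + Poly_Mapping.single i 1" by (simp add: add_ac)
    have h2: "m' + Poly_Mapping.single i 1 + n' = m' + n' + Poly_Mapping.single i 1" by (simp add: add_ac)
    show ?thesis
      apply (simp only: mult_single e mpderiv_single_succ)
      apply (simp only: m n mpderiv_single_succ mult_single)
      apply (simp only: h1 h2)
      apply (simp only: flip: single_add)
      apply (simp add: lookup_add algebra_simps)
      done
  qed
qed

lemma leibniz: "mpderiv i (p * q) = mpderiv i p * q + p * mpderiv i q"
proof (induction p rule: mpoly_induct)
  case 1 then show ?case by (simp add: mpderiv_zero)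
next
  case (2 m c p)
  have s: "mpderiv i (Poly_Mapping.single m c * q) = mpderiv i (Poly_Mapping.single m c) * q + Poly_Mapping.single m c * mpderiv i q"
  proof (induction q rule: mpoly_induct)
    case 1 then show ?case by (simp add: mpderiv_zero)
  next
    case (2 n e q)
    then show ?case
      by (simp add: distrib_left mpderiv_add leibniz_single algebra_simps)
  qed
  show ?case using 2 s
    by (simp add: distrib_right mpderiv_add algebra_simps)
qed

lemma foldr_single_index:
  assumes "distinct xs"
  shows "foldr (\<lambda>j. f j ^^ (if j = i then k else 0)) xs p = (if i \<in> set xs then (f i ^^ k) p else p)"
  using assms by (induction xs) auto

lemma mderiv_multi_single:
  assumes "i < d"
  shows "mderiv_multi d (\<lambda>j. if j = i then k else 0) p = (mpderiv i ^^ k) p"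
  using assms by (simp add: mderiv_multi_def foldr_single_index)

lemma sum_single_index:
  assumes "i < (d::nat)"
  shows "(\<Sum>j<d. (if j = i then k else 0)) = (k::nat)"
  using assms by (subst sum.delta) simp_all

lemma meval_dd:
  "meval (mpderiv i (mpderiv i (p * q))) x =
   meval (mpderiv i (mpderiv i p)) x * meval q x + meval (mpderiv i p) x * meval (mpderiv i q) x + meval (mpderiv i p) x * meval (mpderiv i q) x
   + meval p x * meval (mpderiv i (mpderiv i q)) x"
  proof -
  have "mpderiv i (mpderiv i (p * q)) = (mpderiv i (mpderiv i p) * q + mpderiv i p * mpderiv i q)
        + (mpderiv i p * mpderiv i q + p * mpderiv i (mpderiv i q))"
    by (simp only: leibniz mpderiv_add)
  then show ?thesis by (simp only: meval_add meval_mult)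
qed

theorem mainTheorem3:
  fixes d :: nat and \<psi> :: mpoly and x :: "nat \<Rightarrow> real"
  assumes "in_Rd d \<psi>"
    and "\<exists>q. in_Rd d q \<and> fischer d \<psi> q = 1"
    and "meval \<psi> x = 0"
  shows "zero_multiplicity d \<psi> x \<le> 2"
proof -
  obtain q where q: "fischer d \<psi> q = 1" using assms(2) by blast
  have not3: "\<not> vanishes_to d \<psi> x 3"
  proof
    assume v: "vanishes_to d \<psi> x 3"
    have d1: "meval (mpderiv i \<psi>) x = 0" if "i < d" for i
      using v[unfolded vanishes_to_def, rule_format, of "\<lambda>j. if j = i then 1 else 0"]
      by (simp add: sum_single_index[OF that] mderiv_multi_single[OF that])
    have d2: "meval (mpderiv i (mpderiv i \<psi>)) x = 0" if "i < d" for i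
      using v[unfolded vanishes_to_def, rule_format, of "\<lambda>j. if j = i then 2 else 0"]
      by (simp add: sum_single_index[OF that] mderiv_multi_single[OF that] numeral_2_eq_2)
    have "meval (fischer d \<psi> q) x = (\<Sum>i<d. meval (mpderiv i (mpderiv i (\<psi> * q))) x)"
      by (simp add: fischer_def laplacian_def meval_sum)
    also have "\<dots> = 0"
      by (rule sum.neutral) (simp add: meval_dd d1 d2 assms(3))
    finally show False using q by (simp add: meval_one)
  qed
  have le: "N \<le> 2" if "vanishes_to d \<psi> x N" for N
  proof (rule ccontr)
    assume "\<not> N \<le> 2"
    then have "vanishes_to d \<psi> x 3"
      using that unfolding vanishes_to_def by auto
    with not3 show False by simp
  qed
  have "vanishes_to d \<psi> x 0" by (simp add: vanishes_to_def)
  then have "vanishes_to d \<psi> x (GREATEST N. vanishes_to d \<psi> x N)"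
    by (rule GreatestI_nat) (rule le)
  then show ?thesis unfolding zero_multiplicity_def by (rule le)
qed

end
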